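(* Let $s\ge 1$ be an integer and let $T$ be a tree with maximum degree $\Delta(T)\ge 2$. Then $$br_{\Delta}(T;s)\le 2s(\Delta(T)-1).$$
   Context: For graphs $H$ and $G$ and a positive integer $s$, write $H\xrightarrow{s} G$ if every coloring of the edges of $H$ with $s$ colors contains a monochromatic subgraph isomorphic to $G$. The degree bipartite Ramsey number is $br_{\Delta}(G;s)=\min\{\Delta(H): H \text{ is bipartite and } H\xrightarrow{s} G\}$, where $\Delta(H)$ denotes the maximum degree of $H$. *)

theory Defs
  imports Main "HOL-Library.Extended_Nat"
begin

definition graph :: "'a set \<Rightarrow> 'a set set \<Rightarrow> bool" where
  "graph V E \<longleftrightarrow> finite V \<and> (\<forall>e\<in>E. e \<subseteq> V \<and> card e = 2)"

definition degree :: "'a set set \<Rightarrow> 'a \<Rightarrow> nat" where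
  "degree E v = card {e\<in>E. v \<in> e}"

definition maxdeg :: "'a set \<Rightarrow> 'a set set \<Rightarrow> nat" where
  "maxdeg V E = Max (insert 0 (degree E ` V))"

definition adj :: "'a set set \<Rightarrow> 'a \<Rightarrow> 'a \<Rightarrow> bool" where
  "adj E u v \<longleftrightarrow> {u, v} \<in> E"

definition is_path :: "'a set \<Rightarrow> 'a set set \<Rightarrow> 'a list \<Rightarrow> bool" where
  "is_path V E xs \<longleftrightarrow> xs \<noteq> [] \<and> distinct xs \<and> set xs \<subseteq> V \<and>
     (\<forall>i. Suc i < length xs \<longrightarrow> adj E (xs ! i) (xs ! Suc i))"

definition connected_graph :: "'a set \<Rightarrow> 'a set set \<Rightarrow> bool" where
  "connected_graph V E \<longleftrightarrow>
     (\<forall>u\<in>V. \<forall>v\<in>V. \<exists>xs. is_path V E xs \<and> hd xs = u \<and> last xs = v)"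

definition is_cycle :: "'a set \<Rightarrow> 'a set set \<Rightarrow> 'a list \<Rightarrow> bool" where
  "is_cycle V E xs \<longleftrightarrow> is_path V E xs \<and> length xs \<ge> 3 \<and> adj E (last xs) (hd xs)"

definition tree :: "'a set \<Rightarrow> 'a set set \<Rightarrow> bool" where
  "tree V E \<longleftrightarrow> graph V E \<and> V \<noteq> {} \<and> connected_graph V E \<and> (\<nexists>xs. is_cycle V E xs)"

definition bipartite :: "'a set \<Rightarrow> 'a set set \<Rightarrow> bool" where
  "bipartite V E \<longleftrightarrow> (\<exists>A\<subseteq>V. \<forall>e\<in>E. card (e \<inter> A) = 1)"

definition mono_copy ::
  "'b set \<Rightarrow> 'b set set \<Rightarrow> ('b set \<Rightarrow> nat) \<Rightarrow> 'a set \<Rightarrow> 'a set set \<Rightarrow> bool" where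
  "mono_copy VH EH c VG EG \<longleftrightarrow>
     (\<exists>f k. inj_on f VG \<and> f ` VG \<subseteq> VH \<and>
        (\<forall>e\<in>EG. f ` e \<in> EH \<and> c (f ` e) = k))"

definition arrows ::
  "'b set \<Rightarrow> 'b set set \<Rightarrow> nat \<Rightarrow> 'a set \<Rightarrow> 'a set set \<Rightarrow> bool" where
  "arrows VH EH s VG EG \<longleftrightarrow>
     (\<forall>c. (\<forall>e\<in>EH. c e < s) \<longrightarrow> mono_copy VH EH c VG EG)"

text \<open>Degree bipartite Ramsey number; host graphs are finite graphs on natural-number
  vertices (no loss of generality). Value \<infinity> if no such host exists.\<close>
definition br_Delta :: "'a set \<Rightarrow> 'a set set \<Rightarrow> nat \<Rightarrow> enat" where
  "br_Delta VG EG s = Inf {enat (maxdeg VH EH) | (VH :: nat set) EH.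
     graph VH EH \<and> bipartite VH EH \<and> arrows VH EH s VG EG}"

end

theory Submission
  imports Defs
begin



lemma adj_sym: "adj E u v = adj E v u"
  by (simp add: adj_def insert_commute)

lemma is_path_Cons:
  "is_path V E (x # ys) \<longleftrightarrow> x \<in> V \<and> x \<notin> set ys \<and> (ys = [] \<or> (is_path V E ys \<and> adj E x (hd ys)))"
proof -
  have adjs: "(\<forall>i. Suc i < length (x#ys) \<longrightarrow> adj E ((x#ys) ! i) ((x#ys) ! Suc i)) \<longleftrightarrow>
     (ys = [] \<or> (adj E x (hd ys) \<and> (\<forall>i. Suc i < length ys \<longrightarrow> adj E (ys ! i) (ys ! Suc i))))"
    (is "?L \<longleftrightarrow> ?R")
  proof
    assume L: ?L
    show ?R
    proof (cases "ys = []")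
      case False
      have "\<forall>i. Suc i < length ys \<longrightarrow> adj E (ys ! i) (ys ! Suc i)"
      proof (intro allI impI)
        fix i assume "Suc i < length ys"
        then have "Suc (Suc i) < length (x#ys)" by simp
        with L have "adj E ((x#ys) ! Suc i) ((x#ys) ! Suc (Suc i))" by blast
        then show "adj E (ys ! i) (ys ! Suc i)" by simp
      qed
      moreover have "adj E x (hd ys)"
      proof -
        have "Suc 0 < length (x#ys)" using False by simp
        with L have "adj E ((x#ys) ! 0) ((x#ys) ! Suc 0)" by blast
        then show ?thesis using False by (simp add: hd_conv_nth)
      qed
      ultimately show ?thesis by blast
    qed simp
  next
    assume R: ?R
    show ?L
    proof (intro allI impI)
      fix i assume i: "Suc i < length (x#ys)"
      then have F: "ys \<noteq> []" by auto
      show "adj E ((x#ys) ! i) ((x#ys) ! Suc i)"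
      proof (cases i)
        case 0 then show ?thesis using R F by (simp add: hd_conv_nth)
      next
        case (Suc j)
        then have "Suc j < length ys" using i by simp
        with R F have "adj E (ys ! j) (ys ! Suc j)" by blast
        then show ?thesis using Suc by simp
      qed
    qed
  qed
  show ?thesis unfolding is_path_def adjs by auto
qed

lemma is_path_rev: "is_path V E xs \<Longrightarrow> is_path V E (rev xs)"
proof -
  assume H: "is_path V E xs"
  have "\<forall>i. Suc i < length (rev xs) \<longrightarrow> adj E (rev xs ! i) (rev xs ! Suc i)"
  proof (intro allI impI)
    fix i assume i: "Suc i < length (rev xs)"
    define j where "j = length xs - Suc (Suc i)"
    have j: "Suc j < length xs" using i by (simp add: j_def)
    have e1: "rev xs ! i = xs ! Suc j" using i by (simp add: rev_nth j_def Suc_diff_Suc)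
    have e2: "rev xs ! Suc i = xs ! j" using i by (simp add: rev_nth j_def)
    from H j have "adj E (xs ! j) (xs ! Suc j)" unfolding is_path_def by blast
    then show "adj E (rev xs ! i) (rev xs ! Suc i)" using e1 e2 adj_sym by metis
  qed
  then show ?thesis using H unfolding is_path_def by simp
qed

lemma is_path_map:
  assumes "is_path V E xs" "inj_on f (set xs)" "f ` set xs \<subseteq> V'"
    "\<forall>i. Suc i < length xs \<longrightarrow> adj E' (f (xs ! i)) (f (xs ! Suc i))"
  shows "is_path V' E' (map f xs)"
  using assms by (auto simp: is_path_def distinct_map)


lemma card_nbrs:
  assumes "\<forall>e\<in>F. card e = 2"
  shows "card {y. {x,y} \<in> F} = card {e\<in>F. x\<in>e}"
proof -
  have "bij_betw (\<lambda>y. {x,y}) {y. {x,y} \<in> F} {e\<in>F. x\<in>e}"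
  proof (rule bij_betwI')
    fix y z assume "y \<in> {y. {x,y} \<in> F}" "z \<in> {y. {x,y} \<in> F}"
    show "({x,y} = {x,z}) = (y = z)" by (auto simp: doubleton_eq_iff)
  next
    fix y assume "y \<in> {y. {x,y} \<in> F}" then show "{x,y} \<in> {e\<in>F. x\<in>e}" by auto
  next
    fix e assume e: "e \<in> {e\<in>F. x\<in>e}"
    then have "card e = 2" using assms by auto
    then obtain a b where ab: "e = {a,b}" "a \<noteq> b" by (auto simp: card_2_iff)
    show "\<exists>y\<in>{y. {x,y} \<in> F}. e = {x,y}"
    proof (cases "x = a")
      case True then show ?thesis using e ab by auto
    next
      case False then have "x = b" using e ab by auto
      then show ?thesis using e ab by (auto simp: insert_commute)
    qed
  qed
  then show ?thesis by (rule bij_betw_same_card)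
qed


lemma handshake:
  assumes "finite V" "\<forall>e\<in>E. e \<subseteq> V \<and> card e = 2"
  shows "(\<Sum>v\<in>V. degree E v) = 2 * card E"
proof -
  have "E \<subseteq> Pow V" using assms by auto
  then have fE: "finite E" using finite_subset assms(1) by (metis finite_Pow_iff)
  have "(\<Sum>v\<in>V. degree E v) = (\<Sum>v\<in>V. \<Sum>e\<in>E. if v \<in> e then 1 else 0)"
  proof (rule sum.cong)
    fix v show "degree E v = (\<Sum>e\<in>E. if v \<in> e then 1 else 0)"
      unfolding degree_def using sum.inter_filter[OF fE, of "\<lambda>_. 1::nat" "\<lambda>e. v \<in> e"] by simp
  qed simp
  also have "\<dots> = (\<Sum>e\<in>E. \<Sum>v\<in>V. if v \<in> e then 1 else 0)" by (rule sum.swap)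
  also have "\<dots> = (\<Sum>e\<in>E. card e)"
  proof (rule sum.cong)
    fix e assume "e \<in> E"
    then have "e \<subseteq> V" using assms by auto
    then have "{v\<in>V. v\<in>e} = e" by auto
    then show "(\<Sum>v\<in>V. if v \<in> e then 1 else 0) = card e"
      using sum.inter_filter[OF assms(1), of "\<lambda>_. 1::nat" "\<lambda>v. v \<in> e"] by simp
  qed simp
  also have "\<dots> = (\<Sum>e\<in>E. 2)" using assms by simp
  finally show ?thesis by simp
qed



lemma dense_core:
  fixes k :: nat
  shows "\<And>W F. card W = n \<Longrightarrow> finite W \<Longrightarrow> \<forall>e\<in>F. e \<subseteq> W \<and> card e = 2 \<Longrightarrow>
    card F > (k-1)*(card W - 1) \<Longrightarrow>
    \<exists>W'\<subseteq>W. W' \<noteq> {} \<and> (\<forall>w\<in>W'. k \<le> degree {e\<in>F. e \<subseteq> W'} w)"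
proof (induction n rule: less_induct)
  case (less n W F)
  have FP: "F \<subseteq> Pow W" using less.prems by auto
  then have fF: "finite F" using finite_subset less.prems(2) by (metis finite_Pow_iff)
  show ?case
  proof (cases "\<forall>w\<in>W. k \<le> degree F w")
    case True
    have WF: "{e\<in>F. e \<subseteq> W} = F" using FP by auto
    have "W \<noteq> {}"
    proof
      assume "W = {}"
      then have "F = {}" using less.prems(3) by fastforce
      then show False using less.prems(4) by simp
    qed
    then show ?thesis using True WF by auto
  next
    case False
    then obtain w where w: "w \<in> W" "degree F w < k" by auto
    define W1 where "W1 = W - {w}"
    define F1 where "F1 = {e\<in>F. w \<notin> e}"
    have cW: "card W \<ge> 2"
    proof (rule ccontr)
      assume "\<not> card W \<ge> 2"
      moreover have "card W \<ge> 1" using w less.prems(2) by (metis One_nat_def Suc_leI card_gt_0_iff empty_iff)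
      ultimately have "card W = 1" by simp
      then obtain a where "W = {a}" by (auto simp: card_1_singleton_iff)
      have "F = {}"
      proof (rule ccontr)
        assume "F \<noteq> {}"
        then obtain e where "e \<in> F" by auto
        then have "e \<subseteq> {a}" "card e = 2" using less.prems(3) \<open>W = {a}\<close> by auto
        then show False using card_mono[of "{a}" e] by simp
      qed
      then show False using less.prems(4) \<open>card W = 1\<close> by simp
    qed
    have split: "F = F1 \<union> {e\<in>F. w \<in> e}" "F1 \<inter> {e\<in>F. w \<in> e} = {}" unfolding F1_def by auto
    have cF: "card F = card F1 + degree F w"
    proof -
      have "finite F1" "finite {e\<in>F. w \<in> e}" using fF unfolding F1_def by auto
      then have "card (F1 \<union> {e\<in>F. w \<in> e}) = card F1 + card {e\<in>F. w \<in> e}"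
        using card_Un_disjoint split(2) by blast
      then show ?thesis using split(1) unfolding degree_def by simp
    qed
    have cW1: "card W1 = card W - 1" unfolding W1_def using w less.prems(2) by simp
    have eq: "(k-1)*(card W - 1) = (k-1)*(card W1 - 1) + (k - 1)"
    proof -
      obtain m where m: "card W = m + 2" using cW by (metis add.commute le_Suc_ex)
      then have "card W1 = m + 1" using cW1 by simp
      moreover have "(k-1)*(m+1) = (k-1)*m + (k-1)" by simp
      ultimately show ?thesis using m by simp
    qed
    have IHpre: "card F1 > (k-1)*(card W1 - 1)" using cF eq less.prems(4) w(2) by linarith
    have F1W: "\<forall>e\<in>F1. e \<subseteq> W1 \<and> card e = 2" using less.prems(3) unfolding F1_def W1_def by auto
    have "card W1 < n" using cW1 cW less.prems(1) by simp
    then obtain W' where W': "W' \<subseteq> W1" "W' \<noteq> {}" "\<forall>w\<in>W'. k \<le> degree {e\<in>F1. e \<subseteq> W'} w"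
      using less.IH[OF _ refl _ F1W IHpre] less.prems(2) unfolding W1_def by auto
    have "{e\<in>F1. e \<subseteq> W'} = {e\<in>F. e \<subseteq> W'}" using W'(1) unfolding F1_def W1_def by auto
    then show ?thesis using W' unfolding W1_def by auto
  qed
qed





definition tog :: "'x set \<Rightarrow> 'x \<Rightarrow> 'x set" where
  "tog X e = (if e \<in> X then X - {e} else insert e X)"

lemma tog_tog[simp]: "tog (tog X e) e = X"
  unfolding tog_def by auto

lemma tog_mem: "x \<in> tog X e \<longleftrightarrow> (x \<in> X \<longleftrightarrow> x \<noteq> e)"
  unfolding tog_def by auto

lemma tog_sub: "e \<in> E \<Longrightarrow> X \<subseteq> E \<Longrightarrow> tog X e \<subseteq> E"
  unfolding tog_def by auto

definition liftE :: "'a set set \<Rightarrow> ('a \<times> 'a set set) set set" where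
  "liftE E = {{(u,X),(v, tog X {u,v})} | u v X. {u,v} \<in> E \<and> X \<subseteq> E}"

lemma liftE_mem:
  "{(a,Y1),(b,Y2)} \<in> liftE E \<longleftrightarrow> {a,b} \<in> E \<and> Y1 \<subseteq> E \<and> Y2 = tog Y1 {a,b}"
proof
  assume "{(a,Y1),(b,Y2)} \<in> liftE E"
  then obtain u v X where H: "{(a,Y1),(b,Y2)} = {(u,X),(v, tog X {u,v})}" "{u,v} \<in> E" "X \<subseteq> E"
    unfolding liftE_def by blast
  from H(1) have "((a,Y1) = (u,X) \<and> (b,Y2) = (v, tog X {u,v})) \<or> ((a,Y1) = (v, tog X {u,v}) \<and> (b,Y2) = (u,X))"
    by (simp add: doubleton_eq_iff)
  then show "{a,b} \<in> E \<and> Y1 \<subseteq> E \<and> Y2 = tog Y1 {a,b}"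
  proof
    assume "(a,Y1) = (u,X) \<and> (b,Y2) = (v, tog X {u,v})"
    then show ?thesis using H by auto
  next
    assume A: "(a,Y1) = (v, tog X {u,v}) \<and> (b,Y2) = (u,X)"
    then have "{a,b} = {u,v}" by auto
    moreover have "tog X {u,v} \<subseteq> E" using tog_sub H(2) H(3) .
    ultimately show ?thesis using A H by auto
  qed
next
  assume "{a,b} \<in> E \<and> Y1 \<subseteq> E \<and> Y2 = tog Y1 {a,b}"
  then show "{(a,Y1),(b,Y2)} \<in> liftE E" unfolding liftE_def by blast
qed

lemma liftE_cases:
  assumes "x \<in> liftE E"
  obtains a Y1 b Y2 where "x = {(a,Y1),(b,Y2)}" "{a,b} \<in> E" "Y1 \<subseteq> E" "Y2 = tog Y1 {a,b}"
  using assms unfolding liftE_def by blast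

definition regular :: "'a set \<Rightarrow> 'a set set \<Rightarrow> nat \<Rightarrow> bool" where
  "regular V E D \<longleftrightarrow> (\<forall>v\<in>V. degree E v = D)"

definition nocyc :: "'a set \<Rightarrow> 'a set set \<Rightarrow> nat \<Rightarrow> bool" where
  "nocyc V E g \<longleftrightarrow> (\<forall>xs. is_cycle V E xs \<longrightarrow> g \<le> length xs)"

definition good :: "'a set \<Rightarrow> 'a set set \<Rightarrow> nat \<Rightarrow> nat \<Rightarrow> bool" where
  "good V E D g \<longleftrightarrow> graph V E \<and> bipartite V E \<and> V \<noteq> {} \<and> regular V E D \<and> nocyc V E g"

lemma graph_edge_ne: "graph V E \<Longrightarrow> {a,b} \<in> E \<Longrightarrow> a \<noteq> b"
  unfolding graph_def by fastforce

lemma graph_edge_in: "graph V E \<Longrightarrow> {a,b} \<in> E \<Longrightarrow> a \<in> V \<and> b \<in> V"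
  unfolding graph_def by blast

lemma graph_finE: "graph V E \<Longrightarrow> finite E"
proof -
  assume G: "graph V E"
  then have "E \<subseteq> Pow V" unfolding graph_def by auto
  then show ?thesis using finite_subset G unfolding graph_def by (metis finite_Pow_iff)
qed



lemma lift_graph:
  assumes G: "graph V E"
  shows "graph (V \<times> Pow E) (liftE E)"
  unfolding graph_def
proof (intro conjI ballI)
  show "finite (V \<times> Pow E)" using G graph_finE unfolding graph_def by auto
next
  fix x assume "x \<in> liftE E"
  then obtain a Y1 b Y2 where H: "x = {(a,Y1),(b,Y2)}" "{a,b} \<in> E" "Y1 \<subseteq> E" "Y2 = tog Y1 {a,b}"
    by (rule liftE_cases)
  have "a \<noteq> b" "a \<in> V" "b \<in> V" using graph_edge_ne[OF G H(2)] graph_edge_in[OF G H(2)] by auto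
  moreover have "Y2 \<subseteq> E" using tog_sub[OF H(2) H(3)] H(4) by simp
  ultimately show "x \<subseteq> V \<times> Pow E" "card x = 2" using H by auto
qed



lemma lift_bip:
  assumes G: "graph V E" and B: "bipartite V E"
  shows "bipartite (V \<times> Pow E) (liftE E)"
proof -
  obtain A where A: "A \<subseteq> V" "\<forall>e\<in>E. card (e \<inter> A) = 1" using B unfolding bipartite_def by blast
  have "\<forall>x\<in>liftE E. card (x \<inter> (A \<times> Pow E)) = 1"
  proof
    fix x assume "x \<in> liftE E"
    then obtain a Y1 b Y2 where H: "x = {(a,Y1),(b,Y2)}" "{a,b} \<in> E" "Y1 \<subseteq> E" "Y2 = tog Y1 {a,b}"
      by (rule liftE_cases)
    have Y2: "Y2 \<subseteq> E" using tog_sub[OF H(2) H(3)] H(4) by simp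
    have ne: "a \<noteq> b" using graph_edge_ne[OF G H(2)] .
    have c1: "card ({a,b} \<inter> A) = 1" using A(2) H(2) by blast
    have "(a \<in> A) \<noteq> (b \<in> A)"
    proof
      assume eq: "(a \<in> A) = (b \<in> A)"
      show False
      proof (cases "a \<in> A")
        case True then have "{a,b} \<inter> A = {a,b}" using eq by auto
        then show False using c1 ne by simp
      next
        case False then have "{a,b} \<inter> A = {}" using eq by auto
        then show False using c1 by simp
      qed
    qed
    then show "card (x \<inter> (A \<times> Pow E)) = 1"
    proof (cases "a \<in> A")
      case True
      then have "x \<inter> (A \<times> Pow E) = {(a,Y1)}" using H(1) H(3) \<open>(a \<in> A) \<noteq> (b \<in> A)\<close> by auto
      then show ?thesis by simp
    next
      case False
      then have "x \<inter> (A \<times> Pow E) = {(b,Y2)}" using H(1) Y2 \<open>(a \<in> A) \<noteq> (b \<in> A)\<close> by auto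
      then show ?thesis by simp
    qed
  qed
  moreover have "A \<times> Pow E \<subseteq> V \<times> Pow E" using A(1) by auto
  ultimately show ?thesis unfolding bipartite_def by (intro exI[of _ "A \<times> Pow E"]) simp
qed



lemma lift_reg:
  assumes G: "graph V E" and R: "regular V E D"
  shows "regular (V \<times> Pow E) (liftE E) D"
  unfolding regular_def
proof
  fix z assume "z \<in> V \<times> Pow E"
  then obtain u X where z: "z = (u,X)" "u \<in> V" "X \<subseteq> E" by auto
  have GL: "graph (V \<times> Pow E) (liftE E)" using lift_graph[OF G] .
  have "degree (liftE E) z = card {y. {z,y} \<in> liftE E}"
    unfolding degree_def using card_nbrs[of "liftE E" z] GL unfolding graph_def by auto
  also have "{y. {z,y} \<in> liftE E} = (\<lambda>v. (v, tog X {u,v})) ` {v. {u,v} \<in> E}"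
  proof (rule set_eqI)
    fix y :: "'a \<times> 'a set set"
    obtain b Y2 where y: "y = (b,Y2)" by (cases y)
    show "y \<in> {y. {z,y} \<in> liftE E} \<longleftrightarrow> y \<in> (\<lambda>v. (v, tog X {u,v})) ` {v. {u,v} \<in> E}"
      using liftE_mem[of u X b Y2 E] z y by auto
  qed
  also have "card \<dots> = card {v. {u,v} \<in> E}"
    by (rule card_image) (auto simp: inj_on_def)
  also have "\<dots> = degree E u"
    unfolding degree_def using card_nbrs[of E u] G unfolding graph_def by auto
  also have "\<dots> = D" using R z unfolding regular_def by auto
  finally show "degree (liftE E) z = D" .
qed




lemma lift_nocyc:
  assumes G: "graph V E" and N: "nocyc V E g"
  shows "nocyc (V \<times> Pow E) (liftE E) (Suc g)"
  unfolding nocyc_def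
proof (intro allI impI)
  fix zs assume C: "is_cycle (V \<times> Pow E) (liftE E) zs"
  define l where "l = length zs"
  have l3: "3 \<le> l" using C unfolding is_cycle_def l_def by auto
  have P: "is_path (V \<times> Pow E) (liftE E) zs" using C unfolding is_cycle_def by auto
  have dz: "distinct zs" using P unfolding is_path_def by auto
  have sz: "set zs \<subseteq> V \<times> Pow E" using P unfolding is_path_def by auto
  have pa: "\<And>i. Suc i < l \<Longrightarrow> adj (liftE E) (zs ! i) (zs ! Suc i)"
    using P unfolding is_path_def l_def by blast
  have la: "adj (liftE E) (last zs) (hd zs)" using C unfolding is_cycle_def by auto
  define w where "w k = fst (zs ! k)" for k
  define Y where "Y k = snd (zs ! k)" for k
  define nx where "nx k = Suc k mod l" for k
  have zsk: "\<And>k. zs ! k = (w k, Y k)" unfolding w_def Y_def by simp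
  have adjk: "\<And>k. k < l \<Longrightarrow> {zs!k, zs!(nx k)} \<in> liftE E"
  proof -
    fix k assume k: "k < l"
    show "{zs!k, zs!(nx k)} \<in> liftE E"
    proof (cases "Suc k < l")
      case True
      then have "nx k = Suc k" unfolding nx_def by simp
      then show ?thesis using pa[OF True] unfolding adj_def by simp
    next
      case False
      then have kk: "k = l - 1" using k by simp
      then have "nx k = 0" unfolding nx_def using l3 by simp
      moreover have "zs \<noteq> []" using l3 unfolding l_def by auto
      then have "last zs = zs ! k" using kk unfolding l_def by (simp add: last_conv_nth)
      moreover have "hd zs = zs ! 0" using \<open>zs \<noteq> []\<close> by (simp add: hd_conv_nth)
      ultimately show ?thesis using la unfolding adj_def by simp
    qed
  qed
  have step: "\<And>k. k < l \<Longrightarrow> {w k, w (nx k)} \<in> E \<and> Y (nx k) = tog (Y k) {w k, w (nx k)}"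
  proof -
    fix k assume k: "k < l"
    have "{(w k, Y k), (w (nx k), Y (nx k))} \<in> liftE E" using adjk[OF k] unfolding zsk .
    then show "{w k, w (nx k)} \<in> E \<and> Y (nx k) = tog (Y k) {w k, w (nx k)}"
      unfolding liftE_mem by simp
  qed
  have wV: "\<And>k. k < l \<Longrightarrow> w k \<in> V"
  proof -
    fix k assume "k < l"
    then have "zs ! k \<in> set zs" unfolding l_def by simp
    then have "(w k, Y k) \<in> V \<times> Pow E" using sz unfolding zsk by blast
    then show "w k \<in> V" by simp
  qed
  have nxs: "\<And>k. Suc k < l \<Longrightarrow> nx k = Suc k" unfolding nx_def by simp
  show "Suc g \<le> length zs"
  proof (cases "\<exists>j<l. \<exists>i<j. w i = w j")
    case False
    have winj: "\<And>i j. i < l \<Longrightarrow> j < l \<Longrightarrow> w i = w j \<Longrightarrow> i = j"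
    proof (rule ccontr)
      fix i j assume A: "i < l" "j < l" "w i = w j" "i \<noteq> j"
      show False
      proof (cases "i < j")
        case True then show False using False A by blast
      next
        case F2: False then have "j < i" using A(4) by simp
        then show False using False A by metis
      qed
    qed
    define e0 where "e0 = {w 0, w 1}"
    have nx0: "nx 0 = 1" using l3 nxs[of 0] by simp
    have uniq: "\<And>k. k < l \<Longrightarrow> {w k, w (nx k)} = e0 \<Longrightarrow> k = 0"
    proof -
      fix k assume k: "k < l" and eq: "{w k, w (nx k)} = e0"
      then have "(w k = w 0 \<and> w (nx k) = w 1) \<or> (w k = w 1 \<and> w (nx k) = w 0)"
        unfolding e0_def by (simp add: doubleton_eq_iff)
      then show "k = 0"
      proof
        assume "w k = w 0 \<and> w (nx k) = w 1"
        then show "k = 0" using winj[of k 0] k l3 by simp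
      next
        assume A: "w k = w 1 \<and> w (nx k) = w 0"
        then have "k = 1" using winj[of k 1] k l3 by simp
        then have "nx k = 2" using nxs[of 1] l3 by simp
        then have "w 2 = w 0" using A by simp
        then show "k = 0" using winj[of 2 0] l3 by simp
      qed
    qed
    have flip: "\<And>k. k < l \<Longrightarrow> (e0 \<in> Y (Suc k mod l) \<longleftrightarrow> e0 \<notin> Y 0)"
    proof -
      fix k show "k < l \<Longrightarrow> (e0 \<in> Y (Suc k mod l) \<longleftrightarrow> e0 \<notin> Y 0)"
      proof (induction k)
        case 0
        have "Y 1 = tog (Y 0) e0" using step[of 0] nx0 l3 unfolding e0_def by simp
        moreover have "Suc 0 mod l = 1" using l3 by simp
        ultimately show ?case by (simp add: tog_mem)
      next
        case (Suc k)
        then have k1: "Suc k < l" by simp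
        have "Y (nx (Suc k)) = tog (Y (Suc k)) {w (Suc k), w (nx (Suc k))}" using step[OF k1] by simp
        moreover have "{w (Suc k), w (nx (Suc k))} \<noteq> e0" using uniq[OF k1] by auto
        moreover have "Y (Suc k) = Y (Suc k mod l)" using k1 by simp
        ultimately have "e0 \<in> Y (nx (Suc k)) \<longleftrightarrow> e0 \<in> Y (Suc k mod l)" by (simp add: tog_mem)
        then show ?case using Suc.IH k1 unfolding nx_def by simp
      qed
    qed
    have m0: "Suc (l - 1) mod l = 0" using l3 by simp
    have "l - 1 < l" using l3 by simp
    from flip[OF this] have "e0 \<in> Y (Suc (l - 1) mod l) \<longleftrightarrow> e0 \<notin> Y 0" .
    then have "e0 \<in> Y 0 \<longleftrightarrow> e0 \<notin> Y 0" unfolding m0 .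
    then have False by (cases "e0 \<in> Y 0") simp_all
    then show ?thesis by (rule FalseE)
  next
    case True
    define j where "j = (LEAST j. j < l \<and> (\<exists>i<j. w i = w j))"
    have ex: "\<exists>j. j < l \<and> (\<exists>i<j. w i = w j)" using True by blast
    have jprop: "j < l \<and> (\<exists>i<j. w i = w j)" unfolding j_def by (rule LeastI_ex[OF ex])
    have jmin: "\<And>a b. a < b \<Longrightarrow> b < j \<Longrightarrow> w a \<noteq> w b"
    proof -
      fix a b assume ab: "a < b" "b < j"
      show "w a \<noteq> w b"
      proof
        assume "w a = w b"
        then have "b < l \<and> (\<exists>i<b. w i = w b)" using ab jprop by auto
        then have "j \<le> b" unfolding j_def by (rule Least_le)
        then show False using ab by simp
      qed
    qed
    obtain i where i: "i < j" "w i = w j" using jprop by auto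
    have jl: "j < l" using jprop by simp
    consider "j = Suc i" | "j = Suc (Suc i)" | "Suc (Suc (Suc i)) \<le> j" using i(1) by linarith
    then show ?thesis
    proof cases
      case 1
      then have "{w i, w j} \<in> E" using step[of i] nxs[of i] jl by simp
      then have "w i \<noteq> w j" by (rule graph_edge_ne[OF G])
      then show ?thesis using i(2) by simp
    next
      case 2
      define e where "e = {w i, w (Suc i)}"
      have s1: "Y (Suc i) = tog (Y i) e" using step[of i] nxs[of i] jl 2 unfolding e_def by simp
      have "{w (Suc i), w j} = e" using i(2) unfolding e_def by (simp add: insert_commute)
      then have s2: "Y j = tog (Y (Suc i)) e" using step[of "Suc i"] nxs[of "Suc i"] jl 2 by simp
      have "zs ! j = zs ! i" using zsk s1 s2 i(2) by simp
      then have "j = i" using dz jl i(1) unfolding l_def by (simp add: nth_eq_iff_index_eq)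
      then show ?thesis using i(1) by simp
    next
      case 3
      define cyc where "cyc = map w [i..<j]"
      have lc: "length cyc = j - i" unfolding cyc_def by simp
      have cnth: "\<And>t. t < j - i \<Longrightarrow> cyc ! t = w (i + t)" unfolding cyc_def by simp
      have "is_cycle V E cyc"
        unfolding is_cycle_def is_path_def
      proof (intro conjI allI impI)
        show "cyc \<noteq> []" using i(1) unfolding cyc_def by simp
        show "distinct cyc" unfolding cyc_def distinct_map
        proof
          show "inj_on w (set [i..<j])"
            unfolding inj_on_def by (metis atLeastLessThan_iff jmin linorder_neqE_nat set_upt)
        qed simp
        show "set cyc \<subseteq> V" unfolding cyc_def using wV jl by auto
        show "3 \<le> length cyc" using lc 3 by simp
      next
        fix t assume t: "Suc t < length cyc"
        then have "Suc (i + t) < l" using lc jl by simp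
        then have "{w (i+t), w (Suc (i+t))} \<in> E" using step[of "i+t"] nxs[of "i+t"] by simp
        then show "adj E (cyc ! t) (cyc ! Suc t)" using cnth t lc unfolding adj_def by simp
      next
        have "last cyc = w (j - 1)" unfolding cyc_def using i(1) by (simp add: last_map)
        moreover have "hd cyc = w j" unfolding cyc_def using i by (simp add: hd_map)
        moreover have "{w (j-1), w j} \<in> E" using step[of "j-1"] nxs[of "j-1"] jl i(1) by simp
        ultimately show "adj E (last cyc) (hd cyc)" unfolding adj_def by simp
      qed
      then have "g \<le> j - i" using N lc unfolding nocyc_def by metis
      then show ?thesis using jl unfolding l_def by simp
    qed
  qed
qed




lemma good_transfer:
  fixes V :: "'a set"
  assumes GD: "good V E D g"
  shows "\<exists>(V'::nat set) E'. good V' E' D g"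
proof -
  have G: "graph V E" and B: "bipartite V E" and NE: "V \<noteq> {}" and R: "regular V E D" and N: "nocyc V E g"
    using GD unfolding good_def by auto
  have fV: "finite V" using G unfolding graph_def by auto
  obtain h :: "'a \<Rightarrow> nat" and n where h: "h ` V = {i. i < n}" "inj_on h V"
    using finite_imp_inj_to_nat_seg[OF fV] by blast
  have EV: "\<And>e. e \<in> E \<Longrightarrow> e \<subseteq> V \<and> card e = 2" using G unfolding graph_def by auto
  define V' where "V' = h ` V"
  define E' where "E' = (\<lambda>e. h ` e) ` E"
  have cimg: "\<And>e. e \<subseteq> V \<Longrightarrow> card (h ` e) = card e"
    using h(2) by (meson card_image inj_on_subset)
  have G': "graph V' E'"
    unfolding graph_def
  proof (intro conjI ballI)
    show "finite V'" unfolding V'_def using fV by simp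
  next
    fix x assume "x \<in> E'"
    then obtain e where e: "e \<in> E" "x = h ` e" unfolding E'_def by blast
    show "x \<subseteq> V'" using EV[OF e(1)] e(2) unfolding V'_def by auto
    show "card x = 2" using EV[OF e(1)] e(2) cimg by simp
  qed
  have B': "bipartite V' E'"
  proof -
    obtain A where A: "A \<subseteq> V" "\<forall>e\<in>E. card (e \<inter> A) = 1" using B unfolding bipartite_def by blast
    have "\<forall>x\<in>E'. card (x \<inter> h ` A) = 1"
    proof
      fix x assume "x \<in> E'"
      then obtain e where e: "e \<in> E" "x = h ` e" unfolding E'_def by blast
      have "x \<inter> h ` A = h ` (e \<inter> A)" using e(2) inj_on_image_Int[OF h(2)] EV[OF e(1)] A(1) by simp
      moreover have "card (h ` (e \<inter> A)) = card (e \<inter> A)" using cimg[of "e \<inter> A"] EV[OF e(1)] by auto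
      ultimately show "card (x \<inter> h ` A) = 1" using A(2) e(1) by simp
    qed
    moreover have "h ` A \<subseteq> V'" using A(1) unfolding V'_def by auto
    ultimately show ?thesis unfolding bipartite_def by blast
  qed
  have R': "regular V' E' D"
    unfolding regular_def
  proof
    fix y assume "y \<in> V'"
    then obtain v where v: "v \<in> V" "y = h v" unfolding V'_def by blast
    have "{x\<in>E'. y \<in> x} = (\<lambda>e. h ` e) ` {e\<in>E. v \<in> e}"
    proof (rule set_eqI)
      fix x
      show "x \<in> {x\<in>E'. y \<in> x} \<longleftrightarrow> x \<in> (\<lambda>e. h ` e) ` {e\<in>E. v \<in> e}"
      proof
        assume "x \<in> {x\<in>E'. y \<in> x}"
        then obtain e where e: "e \<in> E" "x = h ` e" "h v \<in> h ` e" unfolding E'_def v(2) by blast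
        then have "v \<in> e" using inj_on_image_mem_iff[OF h(2) v(1)] EV[OF e(1)] by blast
        then show "x \<in> (\<lambda>e. h ` e) ` {e\<in>E. v \<in> e}" using e by blast
      next
        assume "x \<in> (\<lambda>e. h ` e) ` {e\<in>E. v \<in> e}"
        then show "x \<in> {x\<in>E'. y \<in> x}" unfolding E'_def v(2) by blast
      qed
    qed
    moreover have "inj_on (\<lambda>e. h ` e) {e\<in>E. v \<in> e}"
      unfolding inj_on_def using inj_on_image_eq_iff[OF h(2)] EV by blast
    ultimately have "degree E' y = degree E v"
      unfolding degree_def by (simp add: card_image)
    then show "degree E' y = D" using R v(1) unfolding regular_def by simp
  qed
  have N': "nocyc V' E' g"
    unfolding nocyc_def
  proof (intro allI impI)
    fix ys assume C: "is_cycle V' E' ys"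
    define k where "k = the_inv_into V h"
    have kV: "\<And>y. y \<in> V' \<Longrightarrow> k y \<in> V" unfolding k_def V'_def using h(2) by (simp add: the_inv_into_into)
    have kh: "\<And>x. x \<in> V \<Longrightarrow> k (h x) = x" unfolding k_def using h(2) by (simp add: the_inv_into_f_f)
    have kinj: "inj_on k V'" unfolding k_def V'_def using h(2) by (simp add: inj_on_the_inv_into)
    have kadj: "\<And>y1 y2. y1 \<in> V' \<Longrightarrow> y2 \<in> V' \<Longrightarrow> adj E' y1 y2 \<Longrightarrow> adj E (k y1) (k y2)"
    proof -
      fix y1 y2 assume y: "y1 \<in> V'" "y2 \<in> V'" "adj E' y1 y2"
      then obtain e where e: "e \<in> E" "{y1,y2} = h ` e" unfolding adj_def E'_def by blast
      have "k ` {y1,y2} = k ` h ` e" using e(2) by simp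
      also have "\<dots> = e" using kh EV[OF e(1)] by force
      finally show "adj E (k y1) (k y2)" unfolding adj_def using e(1) by simp
    qed
    have P: "is_path V' E' ys" "length ys \<ge> 3" "adj E' (last ys) (hd ys)" using C unfolding is_cycle_def by auto
    have sy: "set ys \<subseteq> V'" "ys \<noteq> []" using P(1) unfolding is_path_def by auto
    have "is_path V E (map k ys)"
    proof (rule is_path_map[OF P(1)])
      show "inj_on k (set ys)" using kinj sy(1) inj_on_subset by blast
      show "k ` set ys \<subseteq> V" using kV sy(1) by blast
      show "\<forall>i. Suc i < length ys \<longrightarrow> adj E (k (ys ! i)) (k (ys ! Suc i))"
      proof (intro allI impI)
        fix i assume i: "Suc i < length ys"
        then have "adj E' (ys ! i) (ys ! Suc i)" using P(1) unfolding is_path_def by blast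
        moreover have "ys ! i \<in> set ys" "ys ! Suc i \<in> set ys" using i by simp_all
        then have "ys ! i \<in> V'" "ys ! Suc i \<in> V'" using sy(1) by auto
        ultimately show "adj E (k (ys ! i)) (k (ys ! Suc i))" using kadj by blast
      qed
    qed
    moreover have "adj E (last (map k ys)) (hd (map k ys))"
    proof -
      have "last ys \<in> V'" "hd ys \<in> V'" using sy by auto
      then have "adj E (k (last ys)) (k (hd ys))" using kadj[OF _ _ P(3)] by blast
      then show ?thesis using sy by (simp add: last_map hd_map)
    qed
    ultimately have "is_cycle V E (map k ys)" using P(2) unfolding is_cycle_def by simp
    then show "g \<le> length ys" using N unfolding nocyc_def by fastforce
  qed
  have "V' \<noteq> {}" using NE unfolding V'_def by simp
  then show ?thesis using G' B' R' N' unfolding good_def by blast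
qed

definition KV :: "nat \<Rightarrow> (nat \<times> bool) set" where "KV D = {0..<D} \<times> UNIV"
definition KE :: "nat \<Rightarrow> (nat \<times> bool) set set" where
  "KE D = {{x,y} | x y. x \<in> KV D \<and> y \<in> KV D \<and> snd x \<noteq> snd y}"

lemma KE_mem: "{x,y} \<in> KE D \<longleftrightarrow> x \<in> KV D \<and> y \<in> KV D \<and> snd x \<noteq> snd y"
proof
  assume "{x,y} \<in> KE D"
  then obtain a b where ab: "{x,y} = {a,b}" "a \<in> KV D" "b \<in> KV D" "snd a \<noteq> snd b" unfolding KE_def by blast
  then have "(x = a \<and> y = b) \<or> (x = b \<and> y = a)" by (simp add: doubleton_eq_iff)
  then show "x \<in> KV D \<and> y \<in> KV D \<and> snd x \<noteq> snd y" using ab by auto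
next
  assume "x \<in> KV D \<and> y \<in> KV D \<and> snd x \<noteq> snd y"
  then show "{x,y} \<in> KE D" unfolding KE_def by blast
qed

lemma K_good: assumes "D \<ge> 1" shows "good (KV D) (KE D) D 0"
proof -
  have G: "graph (KV D) (KE D)"
    unfolding graph_def
  proof (intro conjI ballI)
    show "finite (KV D)" unfolding KV_def by simp
  next
    fix e assume "e \<in> KE D"
    then obtain x y where e: "e = {x,y}" "x \<in> KV D" "y \<in> KV D" "snd x \<noteq> snd y" unfolding KE_def by blast
    then have "x \<noteq> y" by auto
    then show "e \<subseteq> KV D" "card e = 2" using e by auto
  qed
  have B: "bipartite (KV D) (KE D)"
  proof -
    have "\<forall>e\<in>KE D. card (e \<inter> ({0..<D} \<times> {True})) = 1"
    proof
      fix e assume "e \<in> KE D"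
      then obtain x y where e: "e = {x,y}" "x \<in> KV D" "y \<in> KV D" "snd x \<noteq> snd y" unfolding KE_def by blast
      show "card (e \<inter> ({0..<D} \<times> {True})) = 1"
      proof (cases "snd x")
        case True
        then have "e \<inter> ({0..<D} \<times> {True}) = {x}" using e unfolding KV_def by (cases x, cases y) auto
        then show ?thesis by simp
      next
        case False
        then have "e \<inter> ({0..<D} \<times> {True}) = {y}" using e unfolding KV_def by (cases x, cases y) auto
        then show ?thesis by simp
      qed
    qed
    moreover have "{0..<D} \<times> {True} \<subseteq> KV D" unfolding KV_def by auto
    ultimately show ?thesis unfolding bipartite_def by blast
  qed
  have R: "regular (KV D) (KE D) D"
    unfolding regular_def
  proof
    fix x assume x: "x \<in> KV D"
    have "degree (KE D) x = card {y. {x,y} \<in> KE D}"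
      unfolding degree_def using card_nbrs[of "KE D" x] G unfolding graph_def by auto
    also have "{y. {x,y} \<in> KE D} = {0..<D} \<times> {\<not> snd x}"
      using x unfolding KE_mem by (auto simp: KV_def)
    also have "card \<dots> = D" by simp
    finally show "degree (KE D) x = D" .
  qed
  have "KV D \<noteq> {}" using assms unfolding KV_def by auto
  then show ?thesis using G B R unfolding good_def nocyc_def by simp
qed

lemma host_exists: assumes "D \<ge> 1" shows "\<exists>(V::nat set) E. good V E D g"
proof (induction g)
  case 0
  show ?case using good_transfer[OF K_good[OF assms]] .
next
  case (Suc g)
  then obtain V :: "nat set" and E where GD: "good V E D g" by blast
  then have "good (V \<times> Pow E) (liftE E) D (Suc g)"
    unfolding good_def using lift_graph lift_bip lift_reg lift_nocyc by auto
  then show ?case using good_transfer by blast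
qed




lemma cross:
  "hd xs \<in> S \<Longrightarrow> last xs \<notin> S \<Longrightarrow> xs \<noteq> [] \<Longrightarrow> \<exists>i. Suc i < length xs \<and> xs ! i \<in> S \<and> xs ! Suc i \<notin> S"
proof (induction xs)
  case Nil then show ?case by simp
next
  case (Cons x ys)
  then have ys: "ys \<noteq> []" by auto
  show ?case
  proof (cases "hd ys \<in> S")
    case True
    have "last ys \<notin> S" using Cons.prems ys by simp
    then obtain i where "Suc i < length ys" "ys ! i \<in> S" "ys ! Suc i \<notin> S" using Cons.IH True ys by blast
    then show ?thesis by (intro exI[of _ "Suc i"]) simp
  next
    case False
    then show ?thesis using Cons.prems ys by (intro exI[of _ 0]) (simp add: hd_conv_nth)
  qed
qed

definition connS :: "'a set \<Rightarrow> 'a set set \<Rightarrow> 'a set \<Rightarrow> bool" where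
  "connS V E S \<longleftrightarrow> (\<forall>a\<in>S. \<forall>b\<in>S. \<exists>xs. is_path V E xs \<and> set xs \<subseteq> S \<and> hd xs = a \<and> last xs = b)"

lemma ext_path:
  assumes C: "connS V E S" and p: "p \<in> S" and v: "v \<in> V" "v \<notin> S" and e: "{p,v} \<in> E" and b: "b \<in> S"
  shows "\<exists>xs. is_path V E xs \<and> set xs \<subseteq> insert v S \<and> hd xs = v \<and> last xs = b"
proof -
  obtain ys where ys: "is_path V E ys" "set ys \<subseteq> S" "hd ys = p" "last ys = b"
    using C p b unfolding connS_def by blast
  have ne: "ys \<noteq> []" using ys(1) unfolding is_path_def by simp
  have "is_path V E (v # ys)"
    unfolding is_path_Cons using ys ne v e by (auto simp: adj_def insert_commute)
  then show ?thesis using ys ne by (intro exI[of _ "v # ys"]) auto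
qed

lemma embed:
  fixes V :: "'a set" and VH :: "'b set"
  assumes T: "tree V E" and dk: "\<forall>p\<in>V. degree E p \<le> k"
    and WH: "W \<subseteq> VH" "W \<noteq> {}"
    and FW: "\<forall>e\<in>F. e \<subseteq> W \<and> card e = 2" and FH: "F \<subseteq> EH" and fF: "finite F"
    and dF: "\<forall>w\<in>W. k \<le> degree F w"
    and N: "nocyc VH EH (Suc (card V))"
  shows "\<exists>f. inj_on f V \<and> f ` V \<subseteq> W \<and> (\<forall>e\<in>E. f ` e \<in> F)"
proof -
  have G: "graph V E" and VNE: "V \<noteq> {}" and CV: "connected_graph V E" and NC: "\<nexists>xs. is_cycle V E xs"
    using T unfolding tree_def by auto
  have fV: "finite V" using G unfolding graph_def by simp
  have EV: "\<And>e. e \<in> E \<Longrightarrow> e \<subseteq> V \<and> card e = 2" using G unfolding graph_def by auto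
  have fE: "finite E" using graph_finE[OF G] .
  define Inv where "Inv m \<longleftrightarrow> (\<exists>S f. S \<subseteq> V \<and> card S = m \<and> connS V E S \<and> inj_on f S \<and> f ` S \<subseteq> W \<and>
      (\<forall>e\<in>E. e \<subseteq> S \<longrightarrow> f ` e \<in> F))" for m
  have main: "1 \<le> m \<Longrightarrow> m \<le> card V \<Longrightarrow> Inv m" for m
  proof (induction m)
    case 0 then show ?case by simp
  next
    case (Suc m)
    show ?case
    proof (cases "m = 0")
      case True
      obtain v0 where v0: "v0 \<in> V" using VNE by auto
      obtain w0 where w0: "w0 \<in> W" using WH by auto
      have "connS V E {v0}"
        unfolding connS_def
      proof (intro ballI)
        fix a b assume "a \<in> {v0}" "b \<in> {v0}"
        moreover have "is_path V E [v0]" unfolding is_path_def using v0 by simp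
        ultimately show "\<exists>xs. is_path V E xs \<and> set xs \<subseteq> {v0} \<and> hd xs = a \<and> last xs = b"
          by (intro exI[of _ "[v0]"]) simp
      qed
      moreover have "\<forall>e\<in>E. e \<subseteq> {v0} \<longrightarrow> (\<lambda>_. w0) ` e \<in> F"
      proof (intro ballI impI)
        fix e assume "e \<in> E" "e \<subseteq> {v0}"
        then have "card e \<le> 1" "card e = 2" using EV card_mono[of "{v0}" e] by auto
        then show "(\<lambda>_. w0) ` e \<in> F" by simp
      qed
      ultimately show ?thesis unfolding Inv_def using True v0 w0
        by (intro exI[of _ "{v0}"] exI[of _ "\<lambda>_. w0"]) auto
    next
      case False
      then obtain S f where S: "S \<subseteq> V" "card S = m" "connS V E S" "inj_on f S" "f ` S \<subseteq> W"
          "\<forall>e\<in>E. e \<subseteq> S \<longrightarrow> f ` e \<in> F"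
        using Suc unfolding Inv_def by auto
      have fS: "finite S" using S(1) fV finite_subset by blast
      have "S \<noteq> V" using S(2) Suc.prems by auto
      then obtain b where b: "b \<in> V" "b \<notin> S" using S(1) by auto
      obtain a where a: "a \<in> S" using S(2) False by (metis card.empty ex_in_conv)
      obtain xs where xs: "is_path V E xs" "hd xs = a" "last xs = b"
        using CV a b S(1) unfolding connected_graph_def by blast
      have xne: "xs \<noteq> []" using xs(1) unfolding is_path_def by simp
      obtain i where i: "Suc i < length xs" "xs ! i \<in> S" "xs ! Suc i \<notin> S"
        using cross[of xs S] xs a b xne by auto
      define p where "p = xs ! i"
      define v where "v = xs ! Suc i"
      have pS: "p \<in> S" and vS: "v \<notin> S" using i unfolding p_def v_def by auto
      have pv: "{p,v} \<in> E" using xs(1) i(1) unfolding is_path_def adj_def p_def v_def by blast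
      have vV: "v \<in> V" using EV[OF pv] by auto
      have pV: "p \<in> V" using EV[OF pv] by auto
      have uniq: "\<And>q. q \<in> S \<Longrightarrow> {q,v} \<in> E \<Longrightarrow> q = p"
      proof (rule ccontr)
        fix q assume q: "q \<in> S" "{q,v} \<in> E" "q \<noteq> p"
        obtain ys where ys: "is_path V E ys" "set ys \<subseteq> S" "hd ys = p" "last ys = q"
          using S(3) pS q(1) unfolding connS_def by blast
        have ne: "ys \<noteq> []" using ys(1) unfolding is_path_def by simp
        have "length ys \<noteq> 1"
        proof
          assume "length ys = 1"
          then obtain z where "ys = [z]" by (metis One_nat_def length_0_conv length_Suc_conv)
          then show False using ys q by simp
        qed
        moreover have "length ys > 0" using ne by simp
        ultimately have l2: "length ys \<ge> 2" by linarith
        have "is_path V E (v # ys)"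
          unfolding is_path_Cons using ys ne vV vS pv by (auto simp: adj_def insert_commute)
        moreover have "adj E (last (v # ys)) (hd (v # ys))" using ne ys q unfolding adj_def by simp
        ultimately have "is_cycle V E (v # ys)" using l2 unfolding is_cycle_def by simp
        then show False using NC by blast
      qed
      have deg_nb: "\<And>FF x. \<forall>e\<in>FF. card e = 2 \<Longrightarrow> card {y. {x,y} \<in> FF} = degree FF x"
        unfolding degree_def by (rule card_nbrs)
      define NbT where "NbT = {q. {p,q} \<in> E}"
      define Nb where "Nb = {y. {f p, y} \<in> F}"
      have fNbT: "finite NbT" unfolding NbT_def using fV EV
        by (metis (no_types, lifting) insert_subset mem_Collect_eq rev_finite_subset subsetI)
      have cNbT: "card NbT \<le> k" using deg_nb[of E p] EV dk pV unfolding NbT_def by auto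
      have vNbT: "v \<in> NbT" using pv unfolding NbT_def by simp
      have fpW: "f p \<in> W" using S(5) pS by auto
      have cNb: "k \<le> card Nb" using deg_nb[of F "f p"] FW dF fpW unfolding Nb_def by auto
      have NbW: "Nb \<subseteq> \<Union>F" unfolding Nb_def by auto
      have "\<forall>e\<in>F. finite e" using FW by (metis card.infinite zero_neq_numeral)
      then have "finite (\<Union>F)" using fF by simp
      then have fNb: "finite Nb" by (rule finite_subset[OF NbW])
      have bad: "Nb \<inter> f ` S \<subseteq> f ` (NbT - {v})"
      proof
        fix y assume y: "y \<in> Nb \<inter> f ` S"
        then obtain z where z: "z \<in> S" "y = f z" by auto
        have yF: "{f p, f z} \<in> F" using y z unfolding Nb_def by simp
        show "y \<in> f ` (NbT - {v})"
        proof (cases "{p,z} \<in> E")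
          case True
          then have "z \<in> NbT - {v}" using z vS unfolding NbT_def by auto
          then show ?thesis using z by simp
        next
          case False
          have zp: "z \<noteq> p"
          proof
            assume "z = p"
            then have "card {f p, f z} = 1" by simp
            then show False using FW yF by auto
          qed
          obtain ys where ys: "is_path V E ys" "set ys \<subseteq> S" "hd ys = p" "last ys = z"
            using S(3) pS z(1) unfolding connS_def by blast
          have ne: "ys \<noteq> []" using ys(1) unfolding is_path_def by simp
          have l3: "length ys \<ge> 3"
          proof (rule ccontr)
            assume "\<not> length ys \<ge> 3"
            moreover have "0 < length ys" using ne by simp
            ultimately have "length ys = 1 \<or> length ys = 2" by linarith
            then show False
            proof (elim disjE)
              assume 1: "length ys = 1"
              then obtain t where "ys = [t]" by (metis One_nat_def length_0_conv length_Suc_conv)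
              then show False using ys zp by simp
            next
              assume 2: "length ys = 2"
              then obtain t1 t2 where t: "ys = [t1, t2]"
                by (metis One_nat_def Suc_1 length_0_conv length_Suc_conv)
              have "adj E (ys ! 0) (ys ! Suc 0)" using ys(1) 2 unfolding is_path_def by auto
              then show False using t ys False unfolding adj_def by simp
            qed
          qed
          have "is_path VH EH (map f ys)"
          proof (rule is_path_map[OF ys(1)])
            show "inj_on f (set ys)" using S(4) ys(2) inj_on_subset by blast
            show "f ` set ys \<subseteq> VH" using ys(2) S(5) WH(1) by blast
            show "\<forall>j. Suc j < length ys \<longrightarrow> adj EH (f (ys ! j)) (f (ys ! Suc j))"
            proof (intro allI impI)
              fix j assume j: "Suc j < length ys"
              then have "adj E (ys ! j) (ys ! Suc j)" using ys(1) unfolding is_path_def by blast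
              then have eE: "{ys ! j, ys ! Suc j} \<in> E" unfolding adj_def .
              have "ys ! j \<in> set ys" "ys ! Suc j \<in> set ys" using j by simp_all
              then have "{ys ! j, ys ! Suc j} \<subseteq> S" using ys(2) by auto
              then have "f ` {ys ! j, ys ! Suc j} \<in> F" using S(6) eE by blast
              then show "adj EH (f (ys ! j)) (f (ys ! Suc j))" using FH unfolding adj_def by auto
            qed
          qed
          moreover have "adj EH (last (map f ys)) (hd (map f ys))"
            using ne ys yF FH unfolding adj_def by (auto simp: last_map hd_map insert_commute)
          ultimately have "is_cycle VH EH (map f ys)" using l3 unfolding is_cycle_def by simp
          then have "Suc (card V) \<le> length ys" using N unfolding nocyc_def by fastforce
          moreover have "length ys = card (set ys)" using ys(1) unfolding is_path_def by (simp add: distinct_card)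
          moreover have "card (set ys) \<le> card V" using ys(2) S(1) fV by (meson card_mono order_trans)
          ultimately show ?thesis by simp
        qed
      qed
      have "card (Nb \<inter> f ` S) \<le> card (f ` (NbT - {v}))" using bad fNbT by (simp add: card_mono)
      also have "\<dots> \<le> card (NbT - {v})" by (rule card_image_le) (use fNbT in simp)
      also have "\<dots> < card NbT" by (rule card_Diff1_less[OF fNbT vNbT])
      finally have "card (Nb \<inter> f ` S) < card Nb" using cNbT cNb by simp
      then have "Nb \<inter> f ` S \<noteq> Nb" by auto
      then obtain y where y: "y \<in> Nb" "y \<notin> f ` S" by auto
      have yF: "{f p, y} \<in> F" using y unfolding Nb_def by simp
      have yW: "y \<in> W" using FW yF by auto
      define S' where "S' = insert v S"
      define f' where "f' = f(v := y)"
      have f'S: "\<And>x. x \<in> S \<Longrightarrow> f' x = f x"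
      proof -
        fix x assume "x \<in> S"
        then have "x \<noteq> v" using vS by blast
        then show "f' x = f x" unfolding f'_def by simp
      qed
      have imS: "f' ` S = f ` S" by (rule image_cong[OF refl f'S])
      have inj': "inj_on f' S'"
      proof -
        have "inj_on f' S" using S(4) inj_on_cong[of S f' f] f'S by blast
        moreover have "f' v \<notin> f' ` (S - {v})" using y imS vS unfolding f'_def by simp
        ultimately show ?thesis unfolding S'_def by simp
      qed
      have im': "f' ` S' \<subseteq> W" using S(5) yW imS unfolding S'_def f'_def by auto
      have edges': "\<forall>e\<in>E. e \<subseteq> S' \<longrightarrow> f' ` e \<in> F"
      proof (intro ballI impI)
        fix e assume e: "e \<in> E" "e \<subseteq> S'"
        show "f' ` e \<in> F"
        proof (cases "v \<in> e")
          case False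
          then have "e \<subseteq> S" using e(2) unfolding S'_def by auto
          then have "f' ` e = f ` e" using f'S by (intro image_cong[OF refl]) blast
          then show ?thesis using S(6) e(1) \<open>e \<subseteq> S\<close> by simp
        next
          case True
          obtain a1 b1 where ab: "e = {a1,b1}" "a1 \<noteq> b1" using EV[OF e(1)] by (auto simp: card_2_iff)
          obtain q where q: "e = {q, v}" "q \<noteq> v" using ab True by (auto simp: insert_commute)
          have "q \<in> S" using q e(2) unfolding S'_def by auto
          then have "q = p" using uniq q e(1) by simp
          then have "f' ` e = {f p, y}" using q f'S pS unfolding f'_def by auto
          then show ?thesis using yF by simp
        qed
      qed
      have conn': "connS V E S'"
        unfolding connS_def
      proof (intro ballI)
        fix a1 b1 assume ab: "a1 \<in> S'" "b1 \<in> S'"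
        show "\<exists>xs. is_path V E xs \<and> set xs \<subseteq> S' \<and> hd xs = a1 \<and> last xs = b1"
        proof (cases "a1 = v")
          case True
          show ?thesis
          proof (cases "b1 = v")
            case True
            have "is_path V E [v]" unfolding is_path_def using vV by simp
            then show ?thesis using \<open>a1 = v\<close> True unfolding S'_def by (intro exI[of _ "[v]"]) simp
          next
            case False
            then have "b1 \<in> S" using ab unfolding S'_def by simp
            then show ?thesis using ext_path[OF S(3) pS vV vS pv] \<open>a1 = v\<close> unfolding S'_def by blast
          qed
        next
          case False
          then have a1S: "a1 \<in> S" using ab unfolding S'_def by simp
          show ?thesis
          proof (cases "b1 = v")
            case True
            obtain zs where zs: "is_path V E zs" "set zs \<subseteq> insert v S" "hd zs = v" "last zs = a1"
              using ext_path[OF S(3) pS vV vS pv a1S] by blast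
            have ne: "zs \<noteq> []" using zs(1) unfolding is_path_def by simp
            have "is_path V E (rev zs)" using is_path_rev[OF zs(1)] .
            moreover have "hd (rev zs) = a1" "last (rev zs) = b1" using zs ne True
              by (simp_all add: hd_rev last_rev)
            ultimately show ?thesis using zs(2) unfolding S'_def by (intro exI[of _ "rev zs"]) simp
          next
            case False
            then have "b1 \<in> S" using ab unfolding S'_def by simp
            then obtain zs where "is_path V E zs" "set zs \<subseteq> S" "hd zs = a1" "last zs = b1"
              using S(3) a1S unfolding connS_def by blast
            then show ?thesis unfolding S'_def by blast
          qed
        qed
      qed
      have "S' \<subseteq> V" using S(1) vV unfolding S'_def by simp
      moreover have "card S' = Suc m" using S(2) fS vS unfolding S'_def by simp
      ultimately show ?thesis unfolding Inv_def using conn' inj' im' edges'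
        by (intro exI[of _ S'] exI[of _ f']) simp
    qed
  qed
  have "card V \<ge> 1" using VNE fV by (simp add: Suc_leI card_gt_0_iff)
  then obtain S f where S: "S \<subseteq> V" "card S = card V" "inj_on f S" "f ` S \<subseteq> W" "\<forall>e\<in>E. e \<subseteq> S \<longrightarrow> f ` e \<in> F"
    using main[of "card V"] unfolding Inv_def by auto
  have "S = V" using card_subset_eq[OF fV S(1) S(2)] .
  moreover have "\<forall>e\<in>E. f ` e \<in> F" using S(5) EV \<open>S = V\<close> by simp
  ultimately show ?thesis using S by (intro exI[of _ f]) simp
qed




theorem theorem2:
  fixes V :: "'a set" and E :: "'a set set" and s :: nat
  assumes "s \<ge> 1" and "tree V E" and "maxdeg V E \<ge> 2"
  shows "br_Delta V E s \<le> enat (2 * s * (maxdeg V E - 1))"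
proof -
  define k where "k = maxdeg V E"
  define D where "D = 2 * s * (k - 1)"
  have k2: "k \<ge> 2" using assms(3) unfolding k_def .
  have T: "tree V E" using assms(2) .
  have G: "graph V E" using T unfolding tree_def by simp
  have fV: "finite V" using G unfolding graph_def by simp
  have D1: "D \<ge> 1" unfolding D_def using assms(1) k2 by simp
  obtain VH :: "nat set" and EH where H: "good VH EH D (Suc (card V))" using host_exists[OF D1] by blast
  have GH: "graph VH EH" and BH: "bipartite VH EH" and NEH: "VH \<noteq> {}" and RH: "regular VH EH D"
    and NH: "nocyc VH EH (Suc (card V))" using H unfolding good_def by auto
  have fVH: "finite VH" using GH unfolding graph_def by simp
  have fEH: "finite EH" using graph_finE[OF GH] .
  have EHV: "\<forall>e\<in>EH. e \<subseteq> VH \<and> card e = 2" using GH unfolding graph_def by simp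
  have md: "maxdeg VH EH = D"
  proof -
    have "degree EH ` VH = {D}" using NEH RH unfolding regular_def by auto
    then show ?thesis unfolding maxdeg_def by simp
  qed
  have dk: "\<forall>p\<in>V. degree E p \<le> k"
  proof
    fix p assume "p \<in> V"
    then have "degree E p \<in> insert 0 (degree E ` V)" by simp
    moreover have "finite (insert 0 (degree E ` V))" using fV by simp
    ultimately show "degree E p \<le> k" unfolding k_def maxdeg_def by (rule Max_ge[rotated])
  qed
  have arr: "arrows VH EH s V E"
    unfolding arrows_def
  proof (intro allI impI)
    fix c :: "nat set \<Rightarrow> nat" assume c: "\<forall>e\<in>EH. c e < s"
    define n where "n = card VH"
    have n1: "n \<ge> 1" unfolding n_def using NEH fVH by (simp add: Suc_leI card_gt_0_iff)
    have "(\<Sum>v\<in>VH. degree EH v) = 2 * card EH" using handshake[OF fVH EHV] .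
    moreover have "(\<Sum>v\<in>VH. degree EH v) = (\<Sum>v\<in>VH. D)" using RH unfolding regular_def by simp
    ultimately have "2 * card EH = 2 * (s * (k - 1) * n)" unfolding n_def D_def by (simp add: mult.commute mult.left_commute)
    then have cEH: "card EH = s * (k - 1) * n" by simp
    define Ei where "Ei i = {e\<in>EH. c e = i}" for i
    have un: "EH = (\<Union>i\<in>{..<s}. Ei i)" unfolding Ei_def using c by auto
    have "card (\<Union>i\<in>{..<s}. Ei i) = (\<Sum>i<s. card (Ei i))"
      by (rule card_UN_disjoint) (auto simp: Ei_def fEH)
    then have csum: "card EH = (\<Sum>i<s. card (Ei i))" using un by simp
    have "\<exists>i<s. (k - 1) * n \<le> card (Ei i)"
    proof (rule ccontr)
      assume "\<not> (\<exists>i<s. (k - 1) * n \<le> card (Ei i))"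
      then have "\<forall>i\<in>{..<s}. card (Ei i) < (k - 1) * n" by auto
      moreover have "0 \<in> {..<s}" using assms(1) by simp
      then have "{..<s} \<noteq> {}" by blast
      ultimately have "(\<Sum>i<s. card (Ei i)) < (\<Sum>i<s. (k - 1) * n)"
        by (intro sum_strict_mono) auto
      then show False using csum cEH by simp
    qed
    then obtain i where i: "i < s" "(k - 1) * n \<le> card (Ei i)" by blast
    have "(k - 1) * n = (k - 1) * (n - 1) + (k - 1)"
    proof -
      obtain m where "n = Suc m" using n1 not0_implies_Suc by fastforce
      then show ?thesis by simp
    qed
    then have gt: "card (Ei i) > (k - 1) * (card VH - 1)" using i(2) k2 unfolding n_def by simp
    have EiV: "\<forall>e\<in>Ei i. e \<subseteq> VH \<and> card e = 2" using EHV unfolding Ei_def by simp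
    obtain W' where W': "W' \<subseteq> VH" "W' \<noteq> {}" "\<forall>w\<in>W'. k \<le> degree {e\<in>Ei i. e \<subseteq> W'} w"
      using dense_core[OF refl fVH EiV gt] by blast
    define F' where "F' = {e\<in>Ei i. e \<subseteq> W'}"
    have F'W: "\<forall>e\<in>F'. e \<subseteq> W' \<and> card e = 2" unfolding F'_def using EiV by simp
    have F'H: "F' \<subseteq> EH" unfolding F'_def Ei_def by auto
    have fF': "finite F'" using F'H fEH finite_subset by blast
    obtain f where f: "inj_on f V" "f ` V \<subseteq> W'" "\<forall>e\<in>E. f ` e \<in> F'"
      using embed[OF T dk W'(1) W'(2) F'W F'H fF' _ NH] W'(3) unfolding F'_def by blast
    have "f ` V \<subseteq> VH" using f(2) W'(1) by simp
    moreover have "\<forall>e\<in>E. f ` e \<in> EH \<and> c (f ` e) = i"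
      using f(3) unfolding F'_def Ei_def by simp
    ultimately show "mono_copy VH EH c V E"
      unfolding mono_copy_def using f(1) by (intro exI[of _ f] exI[of _ i]) simp
  qed
  have "enat D \<in> {enat (maxdeg VH EH) | (VH :: nat set) EH.
      graph VH EH \<and> bipartite VH EH \<and> arrows VH EH s V E}"
    using md GH BH arr by (metis (mono_tags, lifting) mem_Collect_eq)
  then have "br_Delta V E s \<le> enat D" unfolding br_Delta_def by (rule Inf_lower)
  then show ?thesis unfolding D_def k_def .
qed


end
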